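(* Let $d\ge1$ and let $p,q,r\in(1,\infty)$ satisfy $p^{-1}+q^{-1}+r^{-1}=2$, and let $r'=r/(r-1)$. There exist $C<\infty$ and $\gamma>0$, depending on $(p,q,r)$, such that for any Lebesgue measurable sets $E,E'\subset\mathbb{R}^d$ with positive and finite Lebesgue measures, $$\|\mathbf{1}_E*\mathbf{1}_{E'}\|_{r'}\le C\min\Big(\frac{|E|}{|E'|},\frac{|E'|}{|E|}\Big)^\gamma |E|^{1/p}|E'|^{1/q}.$$
   Context: $\mathbf{1}_E$ denotes the indicator function of $E$, $|E|$ its Lebesgue measure, $*$ convolution on $\mathbb{R}^d$, and $\|\cdot\|_{s}$ the $L^s(\mathbb{R}^d)$ norm. *)

theory Defs
  imports "HOL-Analysis.Analysis"
begin

definition conv :: "('a::euclidean_space \<Rightarrow> real) \<Rightarrow> ('a \<Rightarrow> real) \<Rightarrow> 'a \<Rightarrow> real" where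
  "conv f g x = (LINT y|lebesgue. f y * g (x - y))"

text \<open>L^s norm, as an extended nonnegative real (so that infinite norms are not hidden).\<close>
definition Lp_norm :: "real \<Rightarrow> ('a::euclidean_space \<Rightarrow> real) \<Rightarrow> ennreal" where
  "Lp_norm s f = ennreal ((enn2real (\<integral>\<^sup>+ x. ennreal (\<bar>f x\<bar> powr s) \<partial>lebesgue)) powr (1 / s))
     + (if (\<integral>\<^sup>+ x. ennreal (\<bar>f x\<bar> powr s) \<partial>lebesgue) = \<infinity> then \<infinity> else 0)"

end

theory Submission
  imports Defs
begin


lemma meas2:
  fixes B B' :: "'a::euclidean_space set"
  assumes "B \<in> sets borel" "B' \<in> sets borel"
  shows "(\<lambda>(x,y). ennreal (indicator B y * indicator B' (x - y))) \<in> borel_measurable (lborel \<Otimes>\<^sub>M (lborel::'a measure))"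
proof -
  have d: "(\<lambda>z::'a\<times>'a. fst z - snd z) \<in> borel_measurable (lborel \<Otimes>\<^sub>M lborel)"
    by measurable
  have "(\<lambda>z::'a\<times>'a. ennreal (indicator B (snd z) * indicator B' (fst z - snd z))) \<in> borel_measurable (lborel \<Otimes>\<^sub>M lborel)"
    apply (intro measurable_compose[OF _ measurable_ennreal] borel_measurable_times)
    using assms by measurable
  then show ?thesis
    by (simp add: case_prod_beta)
qed

lemma transl:
  fixes B' :: "'a::euclidean_space set"
  assumes "B' \<in> sets borel"
  shows "(\<integral>\<^sup>+x. ennreal (indicator B' (x - y)) \<partial>lborel) = emeasure lborel B'"
proof -
  have "(\<integral>\<^sup>+x. ennreal (indicator B' (x - y)) \<partial>lborel) = (\<integral>\<^sup>+x. ennreal (indicator B' x) \<partial>distr lborel borel ((+) (-y)))"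
    using assms by (subst nn_integral_distr) (auto simp: algebra_simps)
  also have "\<dots> = emeasure lborel B'"
    using assms by (simp add: lborel_distr_plus ennreal_indicator)
  finally show ?thesis .
qed

lemma tonelli:
  fixes B B' :: "'a::euclidean_space set"
  assumes "B \<in> sets borel" "B' \<in> sets borel"
  shows "(\<integral>\<^sup>+x. \<integral>\<^sup>+y. ennreal (indicator B y * indicator B' (x - y)) \<partial>lborel \<partial>lborel) = emeasure lborel B * emeasure lborel B'"
proof -
  have "(\<integral>\<^sup>+x. \<integral>\<^sup>+y. ennreal (indicator B y * indicator B' (x - y)) \<partial>lborel \<partial>lborel)
     = (\<integral>\<^sup>+y. \<integral>\<^sup>+x. ennreal (indicator B y * indicator B' (x - y)) \<partial>lborel \<partial>lborel)"
    using lborel_pair.Fubini'[OF meas2[OF assms]] by simp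
  also have "\<dots> = (\<integral>\<^sup>+y. ennreal (indicator B y) * emeasure lborel B' \<partial>lborel)"
    apply (rule nn_integral_cong)
    apply (simp add: ennreal_mult' )
    apply (subst nn_integral_cmult)
    using assms apply measurable
    using transl[OF assms(2)] by simp
  also have "\<dots> = emeasure lborel B * emeasure lborel B'"
    using assms by (subst nn_integral_multc) (auto simp: ennreal_indicator)
  finally show ?thesis .
qed

lemma hmeas:
  fixes B B' :: "'a::euclidean_space set"
  assumes "B \<in> sets borel" "B' \<in> sets borel"
  shows "(\<lambda>x. \<integral>\<^sup>+y. ennreal (indicator B y * indicator B' (x - y)) \<partial>lborel) \<in> borel_measurable lborel"
  using lborel.borel_measurable_nn_integral_fst[OF meas2[OF assms]] by simp



lemma key_case:
  fixes a b t u v g :: real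
  assumes "0 < a" "a \<le> b" "0 < t" "u + v = 1 + t" "g \<le> 1 - u"
  shows "(a powr (1/t - 1) * a * b) powr t \<le> (a / b) powr g * a powr u * b powr v"
proof -
  have b: "0 < b" using assms by linarith
  have pos: "0 < a powr (1/t - 1) * a * b" using assms b by simp
  have "ln ((a powr (1/t - 1) * a * b) powr t) = t * ln (a powr (1/t - 1) * a * b)"
    using pos by (simp add: ln_powr)
  also have "ln (a powr (1/t - 1) * a * b) = (1/t - 1) * ln a + ln a + ln b"
    using assms b by (simp add: ln_mult ln_powr)
  also have "t * ((1/t - 1) * ln a + ln a + ln b) = ln a + t * ln b"
    using assms(3) by (simp add: field_simps)
  finally have l: "ln ((a powr (1/t - 1) * a * b) powr t) = ln a + t * ln b" .
  have r: "ln ((a / b) powr g * a powr u * b powr v) = g * (ln a - ln b) + u * ln a + v * ln b"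
    using assms b by (simp add: ln_powr ln_mult ln_div)
  have m: "ln a \<le> ln b" using assms by simp
  have nn: "0 \<le> (1 - u - g) * (ln b - ln a)" using assms m by (intro mult_nonneg_nonneg) auto
  have v: "v = 1 + t - u" using assms(4) by linarith
  have e: "g * (ln a - ln b) + u * ln a + v * ln b - (ln a + t * ln b) = (1 - u - g) * (ln b - ln a)"
    unfolding v by (simp add: algebra_simps)
  have "ln ((a powr (1/t - 1) * a * b) powr t) \<le> ln ((a / b) powr g * a powr u * b powr v)"
    using l r nn e by linarith
  moreover have "0 < (a powr (1/t - 1) * a * b) powr t" using pos assms b by simp
  moreover have "0 < (a / b) powr g * a powr u * b powr v" using assms b by simp
  ultimately show ?thesis by (simp only: ln_le_cancel_iff)
qed


lemma refl_distr:
  fixes x :: "'a::euclidean_space"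
  shows "distr lborel borel (\<lambda>y. x - y) = lborel"
proof -
  have "lborel = density (distr lborel borel (\<lambda>y. x + (-1::real) *\<^sub>R y)) (\<lambda>_. \<bar>-1::real\<bar>^DIM('a))"
    by (rule lborel_affine) simp
  then show ?thesis by (simp add: density_1)
qed

lemma refl_int:
  fixes B' :: "'a::euclidean_space set"
  assumes "B' \<in> sets borel"
  shows "(\<integral>\<^sup>+y. ennreal (indicator B' (x - y)) \<partial>lborel) = emeasure lborel B'"
proof -
  have "(\<integral>\<^sup>+y. ennreal (indicator B' (x - y)) \<partial>lborel) = (\<integral>\<^sup>+z. ennreal (indicator B' z) \<partial>distr lborel borel (\<lambda>y. x - y))"
    using assms by (subst nn_integral_distr) auto
  also have "\<dots> = emeasure lborel B'"
    using assms by (simp add: refl_distr ennreal_indicator)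
  finally show ?thesis .
qed

lemma conv_bounds:
  fixes E E' B B' :: "'a::euclidean_space set"
  assumes "E \<subseteq> B" "E' \<subseteq> B'" "B \<in> sets borel" "B' \<in> sets borel"
  shows "0 \<le> conv (indicator E) (indicator E') x"
    and "ennreal (conv (indicator E) (indicator E') x) \<le> (\<integral>\<^sup>+y. ennreal (indicator B y * indicator B' (x - y)) \<partial>lborel)"
    and "(\<integral>\<^sup>+y. ennreal (indicator B y * indicator B' (x - y)) \<partial>lborel) \<le> emeasure lborel B"
    and "(\<integral>\<^sup>+y. ennreal (indicator B y * indicator B' (x - y)) \<partial>lborel) \<le> emeasure lborel B'"
proof -
  let ?g = "\<lambda>y. (indicator E y * indicator E' (x - y) :: real)"
  show "0 \<le> conv (indicator E) (indicator E') x"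
    unfolding conv_def by (rule integral_nonneg_AE) auto
  have "ennreal (conv (indicator E) (indicator E') x) \<le> (\<integral>\<^sup>+y. ennreal (?g y) \<partial>lebesgue)"
  proof (cases "integrable lebesgue ?g")
    case True
    then show ?thesis unfolding conv_def
      by (subst nn_integral_eq_integral) auto
  next
    case False
    then show ?thesis unfolding conv_def
      by (simp add: not_integrable_integral_eq)
  qed
  also have "\<dots> = (\<integral>\<^sup>+y. ennreal (?g y) \<partial>lborel)"
    by (rule nn_integral_completion)
  also have "\<dots> \<le> (\<integral>\<^sup>+y. ennreal (indicator B y * indicator B' (x - y)) \<partial>lborel)"
    using assms(1,2) by (intro nn_integral_mono) (auto simp: indicator_def)
  finally show "ennreal (conv (indicator E) (indicator E') x) \<le> (\<integral>\<^sup>+y. ennreal (indicator B y * indicator B' (x - y)) \<partial>lborel)" .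
  have "(\<integral>\<^sup>+y. ennreal (indicator B y * indicator B' (x - y)) \<partial>lborel) \<le> (\<integral>\<^sup>+y. indicator B y \<partial>lborel)"
    by (intro nn_integral_mono) (auto simp: indicator_def)
  also have "\<dots> = emeasure lborel B" using assms(3) by simp
  finally show "(\<integral>\<^sup>+y. ennreal (indicator B y * indicator B' (x - y)) \<partial>lborel) \<le> emeasure lborel B" .
  have "(\<integral>\<^sup>+y. ennreal (indicator B y * indicator B' (x - y)) \<partial>lborel) \<le> (\<integral>\<^sup>+y. ennreal (indicator B' (x - y)) \<partial>lborel)"
    by (intro nn_integral_mono) (auto simp: indicator_def)
  also have "\<dots> = emeasure lborel B'" using refl_int[OF assms(4)] by simp
  finally show "(\<integral>\<^sup>+y. ennreal (indicator B y * indicator B' (x - y)) \<partial>lborel) \<le> emeasure lborel B'" .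
qed


lemma upper_borel:
  fixes E :: "'a::euclidean_space set"
  assumes "E \<in> sets lebesgue"
  obtains B where "B \<in> sets borel" "E \<subseteq> B" "emeasure lebesgue E = emeasure lborel B"
  using completion_upper[OF assms] by auto

theorem lemma2p1:
  fixes p q r :: real
  assumes "p > 1" and "q > 1" and "r > 1"
    and "1 / p + 1 / q + 1 / r = 2"
  shows "\<exists>(C::real) \<gamma>. \<gamma> > (0::real) \<and>
    (\<forall>E E' :: 'a::euclidean_space set.
       E \<in> sets lebesgue \<longrightarrow> E' \<in> sets lebesgue \<longrightarrow>
       0 < emeasure lebesgue E \<longrightarrow> emeasure lebesgue E < \<infinity> \<longrightarrow>
       0 < emeasure lebesgue E' \<longrightarrow> emeasure lebesgue E' < \<infinity> \<longrightarrow>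
       Lp_norm (r / (r - 1)) (conv (indicator E) (indicator E'))
         \<le> ennreal (C * (min (measure lebesgue E / measure lebesgue E')
                             (measure lebesgue E' / measure lebesgue E)) powr \<gamma>
                    * measure lebesgue E powr (1 / p) * measure lebesgue E' powr (1 / q)))"
proof -
  define s where "s = r / (r - 1)"
  define g where "g = min (1 - 1/p) (1 - 1/q)"
  have s1: "s > 1" using assms(3) unfolding s_def by (simp add: field_simps)
  have invs: "1 / s = 1 - 1 / r" using assms(3) unfolding s_def by (simp add: field_simps)
  have uv: "1/p + 1/q = 1 + 1/s" using assms(4) invs by linarith
  have gpos: "g > 0" using assms(1,2) unfolding g_def by (simp add: field_simps)
  have main: "Lp_norm (r / (r - 1)) (conv (indicator E) (indicator E'))
         \<le> ennreal (1 * (min (measure lebesgue E / measure lebesgue E')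
                             (measure lebesgue E' / measure lebesgue E)) powr g
                    * measure lebesgue E powr (1 / p) * measure lebesgue E' powr (1 / q))"
    if E: "E \<in> sets lebesgue" and E': "E' \<in> sets lebesgue"
      and E0: "0 < emeasure lebesgue E" and Ef: "emeasure lebesgue E < \<infinity>"
      and E'0: "0 < emeasure lebesgue E'" and E'f: "emeasure lebesgue E' < \<infinity>"
    for E E' :: "'a set"
  proof -
    obtain B where B: "B \<in> sets borel" "E \<subseteq> B" "emeasure lebesgue E = emeasure lborel B"
      using upper_borel[OF E] by blast
    obtain B' where B': "B' \<in> sets borel" "E' \<subseteq> B'" "emeasure lebesgue E' = emeasure lborel B'"
      using upper_borel[OF E'] by blast
    define a where "a = measure lebesgue E"
    define b where "b = measure lebesgue E'"
    have ea: "emeasure lebesgue E = ennreal a"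
      unfolding a_def using Ef by (simp add: emeasure_eq_ennreal_measure)
    have eb: "emeasure lebesgue E' = ennreal b"
      unfolding b_def using E'f by (simp add: emeasure_eq_ennreal_measure)
    have a0: "a > 0" using E0 ea by (simp add: a_def)
    have b0: "b > 0" using E'0 eb by (simp add: b_def)
    have Ba: "emeasure lborel B = ennreal a" using B ea by simp
    have Bb: "emeasure lborel B' = ennreal b" using B' eb by simp
    define f where "f = conv (indicator E) (indicator E')"
    define h where "h = (\<lambda>x. \<integral>\<^sup>+y. ennreal (indicator B y * indicator B' (x - y)) \<partial>lborel)"
    define m where "m = min a b"
    define c where "c = m powr (s - 1)"
    have c0: "c \<ge> 0" unfolding c_def by simp
    have pw: "ennreal (\<bar>f x\<bar> powr s) \<le> ennreal c * h x" for x
    proof -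
      note cb = conv_bounds[OF B(2) B'(2) B(1) B'(1), of x]
      have f0: "0 \<le> f x" using cb(1) unfolding f_def .
      have fh: "ennreal (f x) \<le> h x" using cb(2) unfolding f_def h_def .
      have "ennreal (f x) \<le> ennreal a" using fh cb(3) Ba unfolding h_def by simp
      hence fa: "f x \<le> a" using a0 by simp
      have "ennreal (f x) \<le> ennreal b" using fh cb(4) Bb unfolding h_def by simp
      hence fb: "f x \<le> b" using b0 by simp
      have fm: "f x \<le> m" using fa fb unfolding m_def by simp
      have "f x powr s \<le> c * f x"
      proof (cases "f x = 0")
        case True then show ?thesis using s1 by simp
      next
        case False
        then have fp: "f x > 0" using f0 by simp
        have "f x powr s = f x powr (s - 1) * f x powr 1"
          by (subst powr_add[symmetric]) simp
        also have "\<dots> = f x powr (s - 1) * f x" using fp by simp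
        also have "\<dots> \<le> c * f x"
          unfolding c_def using fp fm s1 by (intro mult_right_mono powr_mono2) auto
        finally show ?thesis .
      qed
      then have "ennreal (\<bar>f x\<bar> powr s) \<le> ennreal (c * f x)" using f0 by (intro ennreal_leI) simp
      also have "\<dots> = ennreal c * ennreal (f x)" using c0 f0 by (simp add: ennreal_mult)
      also have "\<dots> \<le> ennreal c * h x" using fh by (intro mult_left_mono) auto
      finally show ?thesis .
    qed
    define I where "I = (\<integral>\<^sup>+ x. ennreal (\<bar>f x\<bar> powr s) \<partial>lebesgue)"
    have "I \<le> (\<integral>\<^sup>+ x. ennreal c * h x \<partial>lebesgue)"
      unfolding I_def by (intro nn_integral_mono pw)
    also have "\<dots> = (\<integral>\<^sup>+ x. ennreal c * h x \<partial>lborel)" by (rule nn_integral_completion)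
    also have "\<dots> = ennreal c * (\<integral>\<^sup>+ x. h x \<partial>lborel)"
      using hmeas[OF B(1) B'(1)] unfolding h_def by (subst nn_integral_cmult) auto
    also have "(\<integral>\<^sup>+ x. h x \<partial>lborel) = ennreal a * ennreal b"
      using tonelli[OF B(1) B'(1)] Ba Bb unfolding h_def by simp
    also have "ennreal c * (ennreal a * ennreal b) = ennreal (c * a * b)"
      using c0 a0 b0 by (simp add: ennreal_mult mult.assoc)
    finally have Ile: "I \<le> ennreal (c * a * b)" .
    then have Ifin: "I \<noteq> \<infinity>" by (auto simp: top_unique)
    have cab: "0 \<le> c * a * b" using c0 a0 b0 by simp
    have "Lp_norm s f = ennreal (enn2real I powr (1 / s))"
      unfolding Lp_norm_def I_def[symmetric] using Ifin by simp
    also have "\<dots> \<le> ennreal ((c * a * b) powr (1 / s))"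
      using s1 cab Ile by (intro ennreal_leI powr_mono2 enn2real_leI) auto
    finally have L: "Lp_norm s f \<le> ennreal ((c * a * b) powr (1 / s))" .
    have R: "(c * a * b) powr (1 / s) \<le> 1 * (min (a / b) (b / a)) powr g * a powr (1 / p) * b powr (1 / q)"
    proof (cases "a \<le> b")
      case True
      have "(a powr (1 / (1/s) - 1) * a * b) powr (1/s) \<le> (a / b) powr g * a powr (1/p) * b powr (1/q)"
        using s1 uv a0 True unfolding g_def by (intro key_case) auto
      moreover have "min (a / b) (b / a) = a / b"
      proof -
        have "a / b \<le> 1" using True b0 by simp
        moreover have "1 \<le> b / a" using True a0 by simp
        ultimately show ?thesis by simp
      qed
      ultimately show ?thesis using True unfolding c_def m_def by simp
    next
      case False
      have "(b powr (1 / (1/s) - 1) * b * a) powr (1/s) \<le> (b / a) powr g * b powr (1/q) * a powr (1/p)"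
        using s1 uv b0 False unfolding g_def by (intro key_case) auto
      moreover have "min (a / b) (b / a) = b / a"
      proof -
        have "b / a \<le> 1" using False a0 by simp
        moreover have "1 \<le> a / b" using False b0 by simp
        ultimately show ?thesis by simp
      qed
      ultimately show ?thesis using False unfolding c_def m_def by (simp add: mult_ac)
    qed
    have "Lp_norm s f \<le> ennreal (1 * (min (a / b) (b / a)) powr g * a powr (1 / p) * b powr (1 / q))"
      using order_trans[OF L ennreal_leI[OF R]] .
    then show ?thesis
      unfolding s_def f_def a_def b_def .
  qed
  show ?thesis
    apply (rule exI[of _ "1::real"], rule exI[of _ g])
    using gpos main by blast
qed

end
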